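(* Let $n\ge1$, $\sigma>0$, $\alpha\in(0,1)$, and $\boldsymbol\mu\in\mathcal S_n^\cup$. Observe $\mathbf y=\boldsymbol\mu+\boldsymbol\xi$ with $\boldsymbol\xi\sim\mathcal N(\mathbf 0,\sigma^2I_{n\times n})$. Let $\hat{\boldsymbol\mu}=\Pi_{\mathcal S_n^\cup}(\mathbf y)$ be the least squares estimator over $\mathcal S_n^\cup$, $\hat q=q(\hat{\boldsymbol\mu})$, and $$\hat r_\cup=\frac{\sigma^2\hat q\,\big(20+40\log n+10\log(1/\alpha)\big)}{n}.$$ Then with probability at least $1-\alpha$, $$\frac1n\sum_{i=1}^n(\hat\mu_i-\mu_i)^2\le\hat r_\cup .$$
   Context: For $n\ge3$, $\mathcal S_n^\cup=\{\mathbf u\in\mathbb R^n: 2u_i\le u_{i+1}+u_{i-1},\ i=2,\dots,n-1\}$ (convex sequences); $\mathcal S_1^\cup=\mathbb R$, $\mathcal S_2^\cup=\mathbb R^2$. $\Pi_{\mathcal S_n^\cup}$ is the Euclidean projection onto $\mathcal S_n^\cup$. For $\mathbf u\in\mathcal S_n^\cup$, $q(\mathbf u)-1$ is the number of strict inequalities among $2u_i\le u_{i+1}+u_{i-1}$, $i=2,\dots,n-1$; equivalently $q(\mathbf u)$ is the smallest number of affine pieces of $\mathbf u$. *)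

theory Defs
  imports "HOL-Probability.Probability"
begin

text \<open>Vectors in R^n are functions nat => real, coordinates indexed by 1..n.\<close>

definition convex_seqs :: "nat \<Rightarrow> (nat \<Rightarrow> real) set" where
  "convex_seqs n = {u. \<forall>i\<in>{2..n-1}. 2 * u i \<le> u (i+1) + u (i-1)}"

definition sqdist_n :: "nat \<Rightarrow> (nat \<Rightarrow> real) \<Rightarrow> (nat \<Rightarrow> real) \<Rightarrow> real" where
  "sqdist_n n u v = (\<Sum>i=1..n. (u i - v i)^2)"

definition proj_convex :: "nat \<Rightarrow> (nat \<Rightarrow> real) \<Rightarrow> (nat \<Rightarrow> real)" where
  "proj_convex n y = (THE u. u \<in> extensional {1..n} \<and> u \<in> convex_seqs n \<and>
      (\<forall>v\<in>convex_seqs n. sqdist_n n y u \<le> sqdist_n n y v))"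

definition q_pieces :: "nat \<Rightarrow> (nat \<Rightarrow> real) \<Rightarrow> nat" where
  "q_pieces n u = 1 + card {i\<in>{2..n-1}. 2 * u i < u (i+1) + u (i-1)}"

definition gauss_vec :: "nat \<Rightarrow> real \<Rightarrow> (nat \<Rightarrow> real) measure" where
  "gauss_vec n \<sigma> = PiM {1..n} (\<lambda>_. density lborel (normal_density 0 \<sigma>))"

end

theory Submission
  imports Defs "HOL-Analysis.L2_Norm"
begin


lemma convex_seqs_comb:
  assumes "u \<in> convex_seqs n" "v \<in> convex_seqs n" "0 \<le> t" "t \<le> 1"
  shows "(\<lambda>i. u i + t * (v i - u i)) \<in> convex_seqs n"
proof -
  { fix i assume i: "i \<in> {2..n-1}"
    have a: "2 * u i \<le> u (i+1) + u (i-1)" "2 * v i \<le> v (i+1) + v (i-1)"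
      using assms i by (auto simp: convex_seqs_def)
    have "(1-t) * (2 * u i) \<le> (1-t) * (u (i+1) + u (i-1))"
      using a assms by (intro mult_left_mono) auto
    moreover have "t * (2 * v i) \<le> t * (v (i+1) + v (i-1))"
      using a assms by (intro mult_left_mono) auto
    ultimately have "2 * (u i + t * (v i - u i)) \<le> (u (i+1) + t * (v (i+1) - u (i+1))) + (u (i-1) + t * (v (i-1) - u (i-1)))"
      by (simp add: algebra_simps) }
  then show ?thesis by (auto simp: convex_seqs_def)
qed

lemma convex_seqs_restrict:
  assumes "v \<in> convex_seqs n"
  shows "(\<lambda>i. if i \<in> {1..n} then v i else undefined) \<in> convex_seqs n"
  using assms unfolding convex_seqs_def by auto

lemma closed_convex_seqs: "closed (convex_seqs n)"
proof -
  have "convex_seqs n = (\<Inter>i\<in>{2..n-1}. {u. 2 * u i \<le> u (i+1) + u (i-1)})"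
    by (auto simp: convex_seqs_def)
  moreover have "closed {u::nat\<Rightarrow>real. 2 * u i \<le> u (i+1) + u (i-1)}" for i
    by (intro closed_Collect_le continuous_intros continuous_on_product_coordinates)
  ultimately show ?thesis by auto
qed

lemma continuous_sqdist: "continuous_on UNIV (\<lambda>u. sqdist_n n y u)"
  unfolding sqdist_n_def
  by (intro continuous_intros continuous_on_product_coordinates)

lemma proj_exists:
  "\<exists>u. u \<in> extensional {1..n} \<and> u \<in> convex_seqs n \<and> (\<forall>v\<in>convex_seqs n. sqdist_n n y u \<le> sqdist_n n y v)"
proof -
  define z :: "nat \<Rightarrow> real" where "z = (\<lambda>i. if i \<in> {1..n} then 0 else undefined)"
  define S where "S = sqdist_n n y z"
  define R where "R = (\<Sum>i=1..n. \<bar>y i\<bar>) + sqrt S"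
  define B :: "nat \<Rightarrow> real set" where "B = (\<lambda>i. if i \<in> {1..n} then {-R..R} else {undefined})"
  define C where "C = PiE UNIV B \<inter> convex_seqs n"
  have S0: "S \<ge> 0" unfolding S_def sqdist_n_def by (auto intro: sum_nonneg)
  have R0: "R \<ge> 0" unfolding R_def using S0 by (auto intro: sum_nonneg)
  have "compactin (product_topology (\<lambda>_. euclidean) UNIV) (PiE UNIV B)"
    unfolding compactin_PiE B_def by auto
  then have "compact (PiE UNIV B)"
    by (simp add: euclidean_product_topology)
  then have cC: "compact C" unfolding C_def using closed_convex_seqs by auto
  have zK: "z \<in> convex_seqs n" unfolding z_def convex_seqs_def by auto
  have "z \<in> PiE UNIV B" unfolding B_def z_def using R0 by (auto simp: PiE_iff)
  then have zC: "z \<in> C" unfolding C_def using zK by auto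
  obtain u where uC: "u \<in> C" and umin: "\<forall>v\<in>C. sqdist_n n y u \<le> sqdist_n n y v"
    using continuous_attains_inf[OF cC _ continuous_on_subset[OF continuous_sqdist]] zC by blast
  have uS: "sqdist_n n y u \<le> S" using umin zC S_def by auto
  have uext: "u \<in> extensional {1..n}"
    unfolding extensional_def
  proof (intro CollectI allI impI)
    fix x assume "x \<notin> {1..n}"
    have "B x = {undefined}" unfolding B_def using \<open>x \<notin> {1..n}\<close> by (rule if_not_P)
    moreover have "u x \<in> B x" using uC unfolding C_def PiE_iff by blast
    ultimately show "u x = undefined" by simp
  qed
  have "sqdist_n n y u \<le> sqdist_n n y v" if vK: "v \<in> convex_seqs n" for v
  proof -
    define v' where "v' = (\<lambda>i. if i \<in> {1..n} then v i else undefined)"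
    have v'K: "v' \<in> convex_seqs n" unfolding v'_def using convex_seqs_restrict[OF vK] .
    have eq: "sqdist_n n y v' = sqdist_n n y v" unfolding sqdist_n_def v'_def by simp
    show ?thesis
    proof (cases "v' \<in> C")
      case True then show ?thesis using umin eq by auto
    next
      case False
      then have "v' \<notin> PiE UNIV B" using v'K C_def by auto
      then obtain i where i0: "v' i \<notin> B i" by (auto simp: PiE_iff)
      have iN: "i \<in> {1..n}"
      proof (rule ccontr)
        assume "i \<notin> {1..n}"
        then have "B i = {undefined}" "v' i = undefined" unfolding B_def v'_def by auto
        then show False using i0 by auto
      qed
      then have i: "i \<in> {1..n}" "\<not> \<bar>v i\<bar> \<le> R" using i0 unfolding B_def v'_def by auto
      have "\<bar>y i\<bar> \<le> (\<Sum>i=1..n. \<bar>y i\<bar>)" using i by (intro member_le_sum) auto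
      then have "sqrt S < \<bar>y i - v i\<bar>" using i R_def by auto
      then have "sqrt S < sqrt ((y i - v i)^2)" by (simp only: real_sqrt_abs)
      then have "S < (y i - v i)^2" by (simp only: real_sqrt_less_iff)
      also have "\<dots> \<le> sqdist_n n y v" unfolding sqdist_n_def
        using i by (intro member_le_sum) auto
      finally show ?thesis using uS by auto
    qed
  qed
  then show ?thesis using uext uC C_def by auto
qed



lemma sqdist_expand:
  "sqdist_n n y (\<lambda>i. u i + t * (v i - u i)) = sqdist_n n y u
     - 2 * t * (\<Sum>i=1..n. (y i - u i) * (v i - u i)) + t^2 * (\<Sum>i=1..n. (v i - u i)^2)"
  unfolding sqdist_n_def
  by (simp add: sum_distrib_left sum_subtractf[symmetric] sum.distrib[symmetric] power2_eq_square algebra_simps)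

lemma min_variational:
  assumes uK: "u \<in> convex_seqs n" and umin: "\<forall>v\<in>convex_seqs n. sqdist_n n y u \<le> sqdist_n n y v"
    and vK: "v \<in> convex_seqs n"
  shows "(\<Sum>i=1..n. (y i - u i) * (v i - u i)) \<le> 0"
proof (rule ccontr)
  define a where "a = (\<Sum>i=1..n. (y i - u i) * (v i - u i))"
  define b where "b = (\<Sum>i=1..n. (v i - u i)^2)"
  assume "\<not> (\<Sum>i=1..n. (y i - u i) * (v i - u i)) \<le> 0"
  then have a0: "a > 0" unfolding a_def by auto
  have b0: "b \<ge> 0" unfolding b_def by (auto intro: sum_nonneg)
  have key: "2 * a \<le> t * b" if "0 < t" "t \<le> 1" for t
  proof -
    have "sqdist_n n y u \<le> sqdist_n n y (\<lambda>i. u i + t * (v i - u i))"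
      using umin convex_seqs_comb[OF uK vK, of t] that by auto
    then have "0 \<le> - 2 * t * a + t^2 * b" unfolding sqdist_expand a_def b_def by linarith
    then have "t * (2 * a) \<le> t * (t * b)" by (simp add: power2_eq_square algebra_simps)
    then show ?thesis using that by simp
  qed
  show False
  proof (cases "b \<le> a")
    case True
    have "2 * a \<le> 1 * b" using key[of 1] by simp
    then show False using True a0 by simp
  next
    case False
    then have bpos: "b > 0" using a0 by simp
    have "2 * a \<le> (a / b) * b" using key[of "a/b"] a0 bpos False by simp
    then show False using a0 bpos by simp
  qed
qed

lemma proj_unique:
  assumes "u1 \<in> extensional {1..n}" "u1 \<in> convex_seqs n" "\<forall>v\<in>convex_seqs n. sqdist_n n y u1 \<le> sqdist_n n y v"
    and "u2 \<in> extensional {1..n}" "u2 \<in> convex_seqs n" "\<forall>v\<in>convex_seqs n. sqdist_n n y u2 \<le> sqdist_n n y v"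
  shows "u1 = u2"
proof -
  have "(\<Sum>i=1..n. (y i - u1 i) * (u2 i - u1 i)) \<le> 0" using min_variational assms by blast
  moreover have "(\<Sum>i=1..n. (y i - u2 i) * (u1 i - u2 i)) \<le> 0" using min_variational assms by blast
  ultimately have "(\<Sum>i=1..n. (y i - u1 i) * (u2 i - u1 i) + (y i - u2 i) * (u1 i - u2 i)) \<le> 0"
    by (simp add: sum.distrib)
  moreover have "(y i - u1 i) * (u2 i - u1 i) + (y i - u2 i) * (u1 i - u2 i) = (u1 i - u2 i)^2" for i
    by (simp add: power2_eq_square algebra_simps)
  ultimately have s: "(\<Sum>i=1..n. (u1 i - u2 i)^2) \<le> 0" by simp
  have "\<forall>i\<in>{1..n}. (u1 i - u2 i)^2 = 0"
    using sum_nonneg_eq_0_iff[of "{1..n}" "\<lambda>i. (u1 i - u2 i)^2"] s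
    by (metis (no_types, lifting) antisym finite_atLeastAtMost sum_nonneg zero_le_power2)
  then have "\<forall>i\<in>{1..n}. u1 i = u2 i" by simp
  show ?thesis
  proof (rule ext)
    fix i show "u1 i = u2 i"
    proof (cases "i \<in> {1..n}")
      case True then show ?thesis using \<open>\<forall>i\<in>{1..n}. u1 i = u2 i\<close> by blast
    next
      case False then show ?thesis using extensional_arb[OF assms(1) False] extensional_arb[OF assms(4) False] by simp
    qed
  qed
qed

lemma proj_convex_char:
  "proj_convex n y \<in> extensional {1..n} \<and> proj_convex n y \<in> convex_seqs n \<and>
   (\<forall>v\<in>convex_seqs n. sqdist_n n y (proj_convex n y) \<le> sqdist_n n y v)"
proof -
  let ?P = "\<lambda>u. u \<in> extensional {1..n} \<and> u \<in> convex_seqs n \<and>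
      (\<forall>v\<in>convex_seqs n. sqdist_n n y u \<le> sqdist_n n y v)"
  have ex: "\<exists>!u. ?P u"
  proof (rule ex_ex1I)
    show "\<exists>u. ?P u" by (rule proj_exists)
    fix u1 u2 assume "?P u1" "?P u2"
    then show "u1 = u2" using proj_unique[of u1 n y u2] by blast
  qed
  show ?thesis unfolding proj_convex_def by (rule theI'[OF ex])
qed

lemma proj_variational:
  assumes "v \<in> convex_seqs n"
  shows "(\<Sum>i=1..n. (y i - proj_convex n y i) * (v i - proj_convex n y i)) \<le> 0"
  using min_variational proj_convex_char assms by blast

lemma proj_nonexpansive:
  "(\<Sum>i=1..n. (proj_convex n y i - proj_convex n y' i)^2) \<le> (\<Sum>i=1..n. (y i - y' i)^2)"
proof -
  define p where "p = proj_convex n y"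
  define p' where "p' = proj_convex n y'"
  have "(\<Sum>i=1..n. (y i - p i) * (p' i - p i)) \<le> 0"
    unfolding p_def p'_def using proj_variational proj_convex_char by blast
  moreover have "(\<Sum>i=1..n. (y' i - p' i) * (p i - p' i)) \<le> 0"
    unfolding p_def p'_def using proj_variational proj_convex_char by blast
  ultimately have "(\<Sum>i=1..n. (y i - p i) * (p' i - p i) + (y' i - p' i) * (p i - p' i)) \<le> 0"
    by (simp add: sum.distrib)
  moreover have "(y i - p i) * (p' i - p i) + (y' i - p' i) * (p i - p' i)
      \<ge> (p i - p' i)^2 / 2 - (y i - y' i)^2 / 2" for i
  proof -
    have "0 \<le> ((y i - y' i) - (p i - p' i))^2" by simp
    then have h: "(p i - p' i) * (y i - y' i) \<le> ((p i - p' i)^2 + (y i - y' i)^2) / 2"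
      by (simp add: power2_eq_square algebra_simps)
    have "(y i - p i) * (p' i - p i) + (y' i - p' i) * (p i - p' i) = (p i - p' i)^2 - (p i - p' i) * (y i - y' i)"
      by (simp add: power2_eq_square algebra_simps)
    then show ?thesis using h by simp
  qed
  ultimately have "(\<Sum>i=1..n. (p i - p' i)^2 / 2 - (y i - y' i)^2 / 2) \<le> 0"
    by (smt (verit, ccfv_SIG) sum_mono)
  then show ?thesis unfolding p_def p'_def
    by (simp add: sum_subtractf sum_divide_distrib[symmetric])
qed

lemma proj_coord_bound:
  assumes "i \<in> {1..n}"
  shows "\<bar>proj_convex n y i - proj_convex n y' i\<bar> \<le> sqrt (\<Sum>j=1..n. (y j - y' j)^2)"
proof -
  have "(proj_convex n y i - proj_convex n y' i)^2 \<le> (\<Sum>j=1..n. (proj_convex n y j - proj_convex n y' j)^2)"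
    using assms by (intro member_le_sum) auto
  also have "\<dots> \<le> (\<Sum>j=1..n. (y j - y' j)^2)" by (rule proj_nonexpansive)
  finally show ?thesis by (metis real_sqrt_abs real_sqrt_le_mono)
qed

lemma proj_coord_continuous: "continuous_on UNIV (\<lambda>y. proj_convex n y i)"
proof (cases "i \<in> {1..n}")
  case False
  have "proj_convex n y i = undefined" for y
  proof -
    have "proj_convex n y \<in> extensional {1..n}" using proj_convex_char by blast
    then show ?thesis using extensional_arb False by metis
  qed
  then have "(\<lambda>y. proj_convex n y i) = (\<lambda>y. undefined)" by (rule ext)
  then show ?thesis by (simp only:) (rule continuous_on_const)
next
  case True
  show ?thesis
    unfolding continuous_on_eq_continuous_at[OF open_UNIV]
  proof (intro ballI)
    fix y0 :: "nat \<Rightarrow> real"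
    define h where "h = (\<lambda>y::nat\<Rightarrow>real. sqrt (\<Sum>j=1..n. (y j - y0 j)^2))"
    have hc: "continuous_on UNIV h" unfolding h_def
      by (intro continuous_intros continuous_on_product_coordinates)
    then have "(h \<longlongrightarrow> h y0) (at y0)"
      using continuous_on_eq_continuous_at[OF open_UNIV] by (auto simp: isCont_def)
    then have h0: "(h \<longlongrightarrow> 0) (at y0)" unfolding h_def by simp
    have "((\<lambda>y. proj_convex n y i - proj_convex n y0 i) \<longlongrightarrow> 0) (at y0)"
    proof (rule Lim_null_comparison[OF _ h0])
      have "\<forall>y. norm (proj_convex n y i - proj_convex n y0 i) \<le> h y"
        unfolding h_def real_norm_def using proj_coord_bound[OF True] by blast
      then show "\<forall>\<^sub>F y in at y0. norm (proj_convex n y i - proj_convex n y0 i) \<le> h y"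
        by (rule always_eventually)
    qed
    then have "((\<lambda>y. proj_convex n y i) \<longlongrightarrow> proj_convex n y0 i) (at y0)"
      by (simp add: LIM_zero_iff)
    then show "isCont (\<lambda>y. proj_convex n y i) y0" by (simp add: isCont_def)
  qed
qed



definition kinks :: "nat \<Rightarrow> (nat \<Rightarrow> real) \<Rightarrow> nat set" where
  "kinks n u = {i\<in>{2..n-1}. 2 * u i < u (i+1) + u (i-1)}"

definition bl :: "nat set \<Rightarrow> nat \<Rightarrow> nat" where
  "bl T i = card {t\<in>T. t < i}"

definition blk :: "nat \<Rightarrow> nat set \<Rightarrow> nat \<Rightarrow> nat set" where
  "blk n T j = {i\<in>{1..n}. bl T i = j}"

definition cen :: "nat set \<Rightarrow> real" where
  "cen B = (\<Sum>i\<in>B. real i) / card B"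

definition Vv :: "nat set \<Rightarrow> real" where
  "Vv B = (\<Sum>i\<in>B. (real i - cen B)^2)"

definition baff :: "nat \<Rightarrow> nat set \<Rightarrow> (nat \<Rightarrow> real) \<Rightarrow> bool" where
  "baff n T u \<longleftrightarrow> (\<forall>j. \<exists>a b. \<forall>i\<in>blk n T j. u i = a + b * (real i - cen (blk n T j)))"

lemma bl_Suc:
  assumes "finite T"
  shows "bl T (Suc i) = bl T i + (if i \<in> T then 1 else 0)"
proof -
  have "{t\<in>T. t < Suc i} = {t\<in>T. t < i} \<union> (if i \<in> T then {i} else {})"
    by (auto simp: less_Suc_eq)
  then show ?thesis unfolding bl_def using assms by (auto simp: card_insert_if)
qed

lemma bl_mono:
  assumes "finite T" "i \<le> j"
  shows "bl T i \<le> bl T j"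
  unfolding bl_def using assms by (intro card_mono) auto

lemma bl_le: "finite T \<Longrightarrow> bl T i \<le> card T"
  unfolding bl_def by (intro card_mono) auto

lemma affine_ind:
  assumes fT: "finite T"
    and hyp: "\<And>k. 2 \<le> k \<Longrightarrow> k+1 \<le> n \<Longrightarrow> k \<notin> T \<Longrightarrow> 2 * u k = u (k+1) + u (k-1)"
    and i1: "1 \<le> i"
  shows "i \<le> j \<Longrightarrow> j \<le> n \<Longrightarrow> bl T j = bl T i \<Longrightarrow> u j = u i + (real j - real i) * (u (i+1) - u i)"
proof (induction j rule: less_induct)
  case (less j)
  show ?case
  proof (cases "j = i \<or> j = i + 1")
    case True then show ?thesis by auto
  next
    case False
    then have ji: "j \<ge> i + 2" using less.prems by auto
    have b1: "bl T (j-1) = bl T i"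
      using bl_mono[OF fT, of i "j-1"] bl_mono[OF fT, of "j-1" j] less.prems ji by auto
    have b2: "bl T (j-2) = bl T i"
      using bl_mono[OF fT, of i "j-2"] bl_mono[OF fT, of "j-2" j] less.prems ji by auto
    have "bl T (Suc (j-1)) = bl T (j-1) + (if j-1 \<in> T then 1 else 0)" using bl_Suc[OF fT] .
    then have nT: "j - 1 \<notin> T" using b1 less.prems ji by (auto split: if_splits)
    have e: "2 * u (j-1) = u (j-1+1) + u (j-1-1)"
      using hyp[of "j-1"] ji i1 less.prems nT by auto
    have ih1: "u (j-1) = u i + (real (j-1) - real i) * (u (i+1) - u i)"
      using less.IH[of "j-1"] ji less.prems b1 by auto
    have ih2: "u (j-2) = u i + (real (j-2) - real i) * (u (i+1) - u i)"
      using less.IH[of "j-2"] ji less.prems b2 by auto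
    have jj: "j - 1 + 1 = j" "j - 1 - 1 = j - 2" using ji by auto
    have r: "real (j-1) = real j - 1" "real (j-2) = real j - 2" using ji by auto
    show ?thesis using e ih1 ih2 unfolding jj r by (simp add: algebra_simps)
  qed
qed

lemma baffI:
  assumes fT: "finite T"
    and hyp: "\<And>k. 2 \<le> k \<Longrightarrow> k+1 \<le> n \<Longrightarrow> k \<notin> T \<Longrightarrow> 2 * u k = u (k+1) + u (k-1)"
  shows "baff n T u"
  unfolding baff_def
proof
  fix j
  define B where "B = blk n T j"
  show "\<exists>a b. \<forall>i\<in>blk n T j. u i = a + b * (real i - cen (blk n T j))"
  proof (cases "B = {}")
    case True then show ?thesis unfolding B_def by auto
  next
    case False
    have fB: "finite B" unfolding B_def blk_def by auto
    define s where "s = Min B"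
    have sB: "s \<in> B" using Min_in[OF fB False] s_def by simp
    define d where "d = u (s+1) - u s"
    have "\<forall>i\<in>B. u i = (u s + (cen B - real s) * d) + d * (real i - cen B)"
    proof
      fix i assume iB: "i \<in> B"
      have si: "s \<le> i" using Min_le[OF fB iB] s_def by simp
      have iB': "i \<le> n" "bl T i = bl T s" "1 \<le> s" using iB sB unfolding B_def blk_def by auto
      have "u i = u s + (real i - real s) * (u (s+1) - u s)"
        by (rule affine_ind[OF fT hyp iB'(3) si iB'(1) iB'(2)])
      then have "u i = u s + (real i - real s) * d" unfolding d_def .
      then show "u i = (u s + (cen B - real s) * d) + d * (real i - cen B)"
        by (simp add: algebra_simps)
    qed
    then show ?thesis unfolding B_def by blast
  qed
qed

lemma baff_diff:
  assumes "baff n T u" "baff n T v"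
  shows "baff n T (\<lambda>i. u i - v i)"
  unfolding baff_def
proof
  fix j
  obtain a b where ab: "\<forall>i\<in>blk n T j. u i = a + b * (real i - cen (blk n T j))"
    using assms(1) unfolding baff_def by blast
  obtain a' b' where ab': "\<forall>i\<in>blk n T j. v i = a' + b' * (real i - cen (blk n T j))"
    using assms(2) unfolding baff_def by blast
  show "\<exists>a b. \<forall>i\<in>blk n T j. u i - v i = a + b * (real i - cen (blk n T j))"
    by (rule exI[of _ "a - a'"], rule exI[of _ "b - b'"]) (use ab ab' in \<open>auto simp: algebra_simps\<close>)
qed

lemma sum_centered:
  assumes "finite B"
  shows "(\<Sum>i\<in>B. (real i - cen B)) = 0"
proof (cases "B = {}")
  case True then show ?thesis by simp
next
  case False
  then have "card B > 0" using assms by (simp add: card_gt_0_iff)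
  then show ?thesis unfolding cen_def by (simp add: sum_subtractf)
qed

lemma Vv_zero:
  assumes "finite B" "Vv B = 0" "i \<in> B"
  shows "real i - cen B = 0"
proof -
  have "\<forall>i\<in>B. (real i - cen B)^2 = 0"
    using assms sum_nonneg_eq_0_iff[of B "\<lambda>i. (real i - cen B)^2"] unfolding Vv_def by auto
  then show ?thesis using assms by auto
qed

lemma Vv_nonneg: "Vv B \<ge> 0" unfolding Vv_def by (auto intro: sum_nonneg)

lemma cs2:
  fixes x1 x2 y1 y2 :: real
  shows "x1 * y1 + x2 * y2 \<le> sqrt (x1^2 + x2^2) * sqrt (y1^2 + y2^2)"
proof -
  have "(x1 * y1 + x2 * y2)^2 \<le> (x1^2 + x2^2) * (y1^2 + y2^2)"
  proof -
    have "0 \<le> (x1 * y2 - x2 * y1)^2" by simp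
    then show ?thesis by (simp add: power2_eq_square algebra_simps)
  qed
  then have "x1 * y1 + x2 * y2 \<le> sqrt ((x1^2 + x2^2) * (y1^2 + y2^2))" by (rule real_le_rsqrt)
  then show ?thesis by (simp add: real_sqrt_mult)
qed



definition Xq :: "nat set \<Rightarrow> (nat \<Rightarrow> real) \<Rightarrow> real" where
  "Xq B \<xi> = (\<Sum>i\<in>B. \<xi> i)^2 / card B"

definition Yq :: "nat set \<Rightarrow> (nat \<Rightarrow> real) \<Rightarrow> real" where
  "Yq B \<xi> = (\<Sum>i\<in>B. (real i - cen B) * \<xi> i)^2 / Vv B"

definition Qf :: "nat \<Rightarrow> nat set \<Rightarrow> (nat \<Rightarrow> real) \<Rightarrow> real" where
  "Qf n T \<xi> = (\<Sum>j\<in>{0..card T}. Xq (blk n T j) \<xi> + Yq (blk n T j) \<xi>)"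

lemma Xq_nonneg: "Xq B \<xi> \<ge> 0" unfolding Xq_def by simp
lemma Yq_nonneg: "Yq B \<xi> \<ge> 0" unfolding Yq_def using Vv_nonneg by simp

lemma blk_inner:
  assumes fB: "finite B" and u: "\<forall>i\<in>B. u i = a + b * (real i - cen B)"
  shows "(\<Sum>i\<in>B. \<xi> i * u i) \<le> sqrt (\<Sum>i\<in>B. (u i)^2) * sqrt (Xq B \<xi> + Yq B \<xi>)"
proof (cases "B = {}")
  case True then show ?thesis by simp
next
  case False
  define k where "k = real (card B)"
  have k0: "k > 0" unfolding k_def using False fB by (simp add: card_gt_0_iff)
  define S1 where "S1 = (\<Sum>i\<in>B. \<xi> i)"
  define S2 where "S2 = (\<Sum>i\<in>B. (real i - cen B) * \<xi> i)"
  define V where "V = Vv B"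
  have V0: "V \<ge> 0" unfolding V_def by (rule Vv_nonneg)
  have sc: "(\<Sum>i\<in>B. (real i - cen B)) = 0" using sum_centered[OF fB] .
  have e1: "(\<Sum>i\<in>B. \<xi> i * u i) = a * S1 + b * S2"
  proof -
    have "(\<Sum>i\<in>B. \<xi> i * u i) = (\<Sum>i\<in>B. a * \<xi> i + b * ((real i - cen B) * \<xi> i))"
    proof (rule sum.cong[OF refl])
      fix i assume "i \<in> B"
      then have ui: "u i = a + b * (real i - cen B)" using u by blast
      show "\<xi> i * u i = a * \<xi> i + b * ((real i - cen B) * \<xi> i)" unfolding ui by (simp add: algebra_simps)
    qed
    then show ?thesis unfolding S1_def S2_def by (simp add: sum.distrib sum_distrib_left)
  qed
  have e2: "(\<Sum>i\<in>B. (u i)^2) = a^2 * k + b^2 * V"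
  proof -
    have "(\<Sum>i\<in>B. (u i)^2) = (\<Sum>i\<in>B. a^2 + (2 * a * b) * (real i - cen B) + b^2 * (real i - cen B)^2)"
    proof (rule sum.cong[OF refl])
      fix i assume "i \<in> B"
      then have ui: "u i = a + b * (real i - cen B)" using u by blast
      show "(u i)^2 = a^2 + (2 * a * b) * (real i - cen B) + b^2 * (real i - cen B)^2"
        unfolding ui by (simp add: power2_eq_square algebra_simps)
    qed
    also have "\<dots> = a^2 * k + (2 * a * b) * (\<Sum>i\<in>B. (real i - cen B)) + b^2 * V"
      unfolding k_def V_def Vv_def by (simp add: sum.distrib sum_distrib_left[symmetric])
    finally show ?thesis using sc by simp
  qed
  have S2V: "b * S2 = (b * sqrt V) * (S2 / sqrt V)"
  proof (cases "V = 0")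
    case True
    then have "\<forall>i\<in>B. real i - cen B = 0" using Vv_zero[OF fB] V_def by auto
    then have "S2 = 0" unfolding S2_def by simp
    then show ?thesis by simp
  next
    case False then show ?thesis using V0 by simp
  qed
  have S1k: "a * S1 = (a * sqrt k) * (S1 / sqrt k)" using k0 by simp
  have "a * S1 + b * S2 \<le> sqrt ((a * sqrt k)^2 + (b * sqrt V)^2) * sqrt ((S1 / sqrt k)^2 + (S2 / sqrt V)^2)"
    unfolding S2V S1k by (rule cs2)
  also have "(a * sqrt k)^2 + (b * sqrt V)^2 = a^2 * k + b^2 * V"
    using k0 V0 by (simp add: power_mult_distrib)
  also have "(S1 / sqrt k)^2 + (S2 / sqrt V)^2 = Xq B \<xi> + Yq B \<xi>"
    unfolding Xq_def Yq_def S1_def[symmetric] S2_def[symmetric] V_def[symmetric] k_def[symmetric]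
    using k0 V0 by (simp add: power_divide)
  finally show ?thesis using e1 e2 by simp
qed

lemma sum_blocks:
  assumes fT: "finite T"
  shows "(\<Sum>i=1..n. f i) = (\<Sum>j\<in>{0..card T}. \<Sum>i\<in>blk n T j. f i)"
proof -
  have "bl T ` {1..n} \<subseteq> {0..card T}" using bl_le[OF fT] by auto
  then have "(\<Sum>j\<in>{0..card T}. sum f {x. x \<in> {1..n} \<and> bl T x = j}) = sum f {1..n}"
    by (intro sum.group) auto
  then show ?thesis unfolding blk_def by simp
qed

lemma baff_inner:
  assumes fT: "finite T" and ub: "baff n T u"
  shows "(\<Sum>i=1..n. \<xi> i * u i) \<le> sqrt (\<Sum>i=1..n. (u i)^2) * sqrt (Qf n T \<xi>)"
proof -
  define A where "A j = (\<Sum>i\<in>blk n T j. (u i)^2)" for j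
  define C where "C j = Xq (blk n T j) \<xi> + Yq (blk n T j) \<xi>" for j
  have A0: "A j \<ge> 0" for j unfolding A_def by (auto intro: sum_nonneg)
  have C0: "C j \<ge> 0" for j unfolding C_def using Xq_nonneg Yq_nonneg by (simp add: add_nonneg_nonneg)
  have fb: "finite (blk n T j)" for j unfolding blk_def by auto
  have "(\<Sum>i=1..n. \<xi> i * u i) = (\<Sum>j\<in>{0..card T}. \<Sum>i\<in>blk n T j. \<xi> i * u i)"
    by (rule sum_blocks[OF fT])
  also have "\<dots> \<le> (\<Sum>j\<in>{0..card T}. \<bar>sqrt (A j)\<bar> * \<bar>sqrt (C j)\<bar>)"
  proof (rule sum_mono)
    fix j
    obtain a b where ab: "\<forall>i\<in>blk n T j. u i = a + b * (real i - cen (blk n T j))"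
      using ub unfolding baff_def by blast
    show "(\<Sum>i\<in>blk n T j. \<xi> i * u i) \<le> \<bar>sqrt (A j)\<bar> * \<bar>sqrt (C j)\<bar>"
      using blk_inner[OF fb ab, of \<xi>] A0 C0 unfolding A_def C_def by simp
  qed
  also have "\<dots> \<le> L2_set (\<lambda>j. sqrt (A j)) {0..card T} * L2_set (\<lambda>j. sqrt (C j)) {0..card T}"
    by (rule L2_set_mult_ineq)
  also have "L2_set (\<lambda>j. sqrt (A j)) {0..card T} = sqrt (\<Sum>i=1..n. (u i)^2)"
    unfolding L2_set_def using A0 sum_blocks[OF fT, of "\<lambda>i. (u i)^2" n] unfolding A_def by simp
  also have "L2_set (\<lambda>j. sqrt (C j)) {0..card T} = sqrt (Qf n T \<xi>)"
    unfolding L2_set_def Qf_def using C0 unfolding C_def by simp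
  finally show ?thesis .
qed



definition ma :: "nat set \<Rightarrow> (nat \<Rightarrow> real) \<Rightarrow> real" where
  "ma B \<mu> = (\<Sum>k\<in>B. \<mu> k) / card B"
definition mb :: "nat set \<Rightarrow> (nat \<Rightarrow> real) \<Rightarrow> real" where
  "mb B \<mu> = (\<Sum>k\<in>B. (real k - cen B) * \<mu> k) / Vv B"

definition mproj :: "nat \<Rightarrow> nat set \<Rightarrow> (nat \<Rightarrow> real) \<Rightarrow> nat \<Rightarrow> real" where
  "mproj n T \<mu> i = ma (blk n T (bl T i)) \<mu> + mb (blk n T (bl T i)) \<mu> * (real i - cen (blk n T (bl T i)))"

definition Rf :: "nat \<Rightarrow> nat set \<Rightarrow> (nat \<Rightarrow> real) \<Rightarrow> (nat \<Rightarrow> real) \<Rightarrow> real" where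
  "Rf n T \<mu> \<xi> = (\<Sum>i=1..n. (\<mu> i - mproj n T \<mu> i) * \<xi> i)^2 / (\<Sum>i=1..n. (\<mu> i - mproj n T \<mu> i)^2)"

lemma Rf_nonneg: "Rf n T \<mu> \<xi> \<ge> 0"
  unfolding Rf_def by (auto intro!: divide_nonneg_nonneg sum_nonneg)

lemma mproj_blk: "i \<in> blk n T j \<Longrightarrow> mproj n T \<mu> i = ma (blk n T j) \<mu> + mb (blk n T j) \<mu> * (real i - cen (blk n T j))"
  unfolding mproj_def blk_def by auto

lemma mproj_baff: "baff n T (mproj n T \<mu>)"
  unfolding baff_def using mproj_blk by blast

lemma blk_orth:
  assumes fB: "finite B"
    and m: "\<forall>i\<in>B. m i = ma B \<mu> + mb B \<mu> * (real i - cen B)"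
    and u: "\<forall>i\<in>B. u i = a + b * (real i - cen B)"
  shows "(\<Sum>i\<in>B. (\<mu> i - m i) * u i) = 0"
proof (cases "B = {}")
  case True then show ?thesis by simp
next
  case False
  define k where "k = real (card B)"
  have k0: "k > 0" unfolding k_def using False fB by (simp add: card_gt_0_iff)
  have sc: "(\<Sum>i\<in>B. (real i - cen B)) = 0" using sum_centered[OF fB] .
  have s1: "(\<Sum>i\<in>B. m i) = (\<Sum>i\<in>B. \<mu> i)"
  proof -
    have "(\<Sum>i\<in>B. m i) = (\<Sum>i\<in>B. ma B \<mu> + mb B \<mu> * (real i - cen B))"
      using m by (intro sum.cong) auto
    also have "\<dots> = k * ma B \<mu> + mb B \<mu> * (\<Sum>i\<in>B. (real i - cen B))"
      unfolding k_def by (simp add: sum.distrib sum_distrib_left)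
    also have "\<dots> = (\<Sum>i\<in>B. \<mu> i)" using sc k0 unfolding ma_def k_def by simp
    finally show ?thesis .
  qed
  have s2: "(\<Sum>i\<in>B. m i * (real i - cen B)) = (\<Sum>i\<in>B. \<mu> i * (real i - cen B))"
  proof (cases "Vv B = 0")
    case True
    then have "\<forall>i\<in>B. real i - cen B = 0" using Vv_zero[OF fB] by auto
    then show ?thesis by simp
  next
    case False
    have "(\<Sum>i\<in>B. m i * (real i - cen B)) = (\<Sum>i\<in>B. ma B \<mu> * (real i - cen B) + mb B \<mu> * (real i - cen B)^2)"
    proof (rule sum.cong[OF refl])
      fix i assume "i \<in> B"
      then have mi: "m i = ma B \<mu> + mb B \<mu> * (real i - cen B)" using m by blast
      show "m i * (real i - cen B) = ma B \<mu> * (real i - cen B) + mb B \<mu> * (real i - cen B)^2"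
        unfolding mi by (simp add: power2_eq_square algebra_simps)
    qed
    also have "\<dots> = ma B \<mu> * (\<Sum>i\<in>B. (real i - cen B)) + mb B \<mu> * Vv B"
      unfolding Vv_def by (simp add: sum.distrib sum_distrib_left)
    also have "\<dots> = (\<Sum>i\<in>B. \<mu> i * (real i - cen B))" using sc False unfolding mb_def
      by (simp add: mult.commute)
    finally show ?thesis .
  qed
  have "(\<Sum>i\<in>B. (\<mu> i - m i) * u i) = (\<Sum>i\<in>B. a * (\<mu> i - m i) + b * (\<mu> i * (real i - cen B) - m i * (real i - cen B)))"
  proof (rule sum.cong[OF refl])
    fix i assume "i \<in> B"
    then have ui: "u i = a + b * (real i - cen B)" using u by blast
    show "(\<mu> i - m i) * u i = a * (\<mu> i - m i) + b * (\<mu> i * (real i - cen B) - m i * (real i - cen B))"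
      unfolding ui by (simp add: algebra_simps)
  qed
  also have "\<dots> = a * ((\<Sum>i\<in>B. \<mu> i) - (\<Sum>i\<in>B. m i)) + b * ((\<Sum>i\<in>B. \<mu> i * (real i - cen B)) - (\<Sum>i\<in>B. m i * (real i - cen B)))"
    by (simp add: sum.distrib right_diff_distrib sum_subtractf sum_distrib_left)
  also have "\<dots> = 0" using s1 s2 by simp
  finally show ?thesis .
qed

lemma mproj_orth:
  assumes fT: "finite T" and ub: "baff n T u"
  shows "(\<Sum>i=1..n. (\<mu> i - mproj n T \<mu> i) * u i) = 0"
proof -
  have "(\<Sum>i=1..n. (\<mu> i - mproj n T \<mu> i) * u i) = (\<Sum>j\<in>{0..card T}. \<Sum>i\<in>blk n T j. (\<mu> i - mproj n T \<mu> i) * u i)"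
    by (rule sum_blocks[OF fT])
  also have "\<dots> = 0"
  proof (rule sum.neutral, rule ballI)
    fix j
    obtain a b where ab: "\<forall>i\<in>blk n T j. u i = a + b * (real i - cen (blk n T j))"
      using ub unfolding baff_def by blast
    have fb: "finite (blk n T j)" unfolding blk_def by auto
    show "(\<Sum>i\<in>blk n T j. (\<mu> i - mproj n T \<mu> i) * u i) = 0"
      by (rule blk_orth[OF fb _ ab]) (use mproj_blk in blast)
  qed
  finally show ?thesis .
qed

lemma kinks_sub: "kinks n u \<subseteq> {2..n-1}" unfolding kinks_def by auto

lemma det_bound:
  fixes \<mu> \<xi> :: "nat \<Rightarrow> real"
  assumes muK: "\<mu> \<in> convex_seqs n"
  defines "p \<equiv> proj_convex n (\<lambda>i. \<mu> i + \<xi> i)"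
  defines "T \<equiv> kinks n p"
  shows "(\<Sum>i=1..n. (p i - \<mu> i)^2) \<le> Qf n T \<xi> + Rf n T \<mu> \<xi>"
proof -
  have fT: "finite T" unfolding T_def using kinks_sub finite_subset by blast
  define m where "m = mproj n T \<mu>"
  define D where "D = (\<Sum>i=1..n. (p i - \<mu> i)^2)"
  define D1 where "D1 = (\<Sum>i=1..n. (p i - m i)^2)"
  define D2 where "D2 = (\<Sum>i=1..n. (m i - \<mu> i)^2)"
  define Q where "Q = Qf n T \<xi>"
  define R where "R = Rf n T \<mu> \<xi>"
  have D0: "D \<ge> 0" "D1 \<ge> 0" "D2 \<ge> 0" unfolding D_def D1_def D2_def by (auto intro: sum_nonneg)
  have Q0: "Q \<ge> 0" unfolding Q_def Qf_def using Xq_nonneg Yq_nonneg by (auto intro: sum_nonneg add_nonneg_nonneg)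
  have R0: "R \<ge> 0" unfolding R_def by (rule Rf_nonneg)
  have pK: "p \<in> convex_seqs n" unfolding p_def using proj_convex_char by blast
  have "(\<Sum>i=1..n. ((\<mu> i + \<xi> i) - p i) * (\<mu> i - p i)) \<le> 0"
    unfolding p_def by (rule proj_variational[OF muK])
  moreover have "((\<mu> i + \<xi> i) - p i) * (\<mu> i - p i) = (p i - \<mu> i)^2 - \<xi> i * (p i - \<mu> i)" for i
    by (simp add: power2_eq_square algebra_simps)
  ultimately have "(\<Sum>i=1..n. (p i - \<mu> i)^2 - \<xi> i * (p i - \<mu> i)) \<le> 0" by simp
  then have a: "D \<le> (\<Sum>i=1..n. \<xi> i * (p i - \<mu> i))" unfolding D_def by (simp add: sum_subtractf)
  have pb: "baff n T p"
  proof (rule baffI[OF fT])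
    fix k assume k: "2 \<le> k" "k+1 \<le> n" "k \<notin> T"
    then have "2 * p k \<le> p (k+1) + p (k-1)" using pK unfolding convex_seqs_def by auto
    moreover have "\<not> 2 * p k < p (k+1) + p (k-1)" using k unfolding T_def kinks_def by auto
    ultimately show "2 * p k = p (k+1) + p (k-1)" by simp
  qed
  have d1b: "baff n T (\<lambda>i. p i - m i)" unfolding m_def by (rule baff_diff[OF pb mproj_baff])
  have orth: "(\<Sum>i=1..n. (\<mu> i - m i) * (p i - m i)) = 0"
    unfolding m_def by (rule mproj_orth[OF fT d1b[unfolded m_def]])
  have DD: "D = D1 + D2"
  proof -
    have "(p i - \<mu> i)^2 = (p i - m i)^2 + (m i - \<mu> i)^2 - 2 * ((\<mu> i - m i) * (p i - m i))" for i
      by (simp add: power2_eq_square algebra_simps)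
    then have "D = (\<Sum>i=1..n. (p i - m i)^2 + (m i - \<mu> i)^2 - 2 * ((\<mu> i - m i) * (p i - m i)))"
      unfolding D_def by simp
    also have "\<dots> = D1 + D2 - 2 * (\<Sum>i=1..n. (\<mu> i - m i) * (p i - m i))"
      unfolding D1_def D2_def by (simp add: sum.distrib sum_subtractf sum_distrib_left)
    finally show ?thesis using orth by simp
  qed
  have split: "(\<Sum>i=1..n. \<xi> i * (p i - \<mu> i)) = (\<Sum>i=1..n. \<xi> i * (p i - m i)) + (\<Sum>i=1..n. \<xi> i * (m i - \<mu> i))"
    by (simp add: sum.distrib[symmetric] algebra_simps)
  have b1: "(\<Sum>i=1..n. \<xi> i * (p i - m i)) \<le> sqrt D1 * sqrt Q"
    unfolding D1_def Q_def using baff_inner[OF fT d1b, of \<xi>] by simp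
  have b2: "(\<Sum>i=1..n. \<xi> i * (m i - \<mu> i)) \<le> sqrt D2 * sqrt R"
  proof (cases "D2 = 0")
    case True
    then have "\<forall>i\<in>{1..n}. (m i - \<mu> i)^2 = 0"
      using sum_nonneg_eq_0_iff[of "{1..n}" "\<lambda>i. (m i - \<mu> i)^2"] unfolding D2_def by auto
    then have "(\<Sum>i=1..n. \<xi> i * (m i - \<mu> i)) = 0" by simp
    then show ?thesis using True by simp
  next
    case False
    then have D2p: "D2 > 0" using D0 by simp
    have eq1: "(\<Sum>i=1..n. (\<mu> i - mproj n T \<mu> i)^2) = D2"
      unfolding D2_def m_def by (intro sum.cong) (auto simp: power2_commute)
    have eq2: "(\<Sum>i=1..n. (\<mu> i - mproj n T \<mu> i) * \<xi> i) = - (\<Sum>i=1..n. \<xi> i * (m i - \<mu> i))"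
      unfolding m_def by (simp add: sum_negf[symmetric] algebra_simps)
    have "R = (\<Sum>i=1..n. \<xi> i * (m i - \<mu> i))^2 / D2"
      unfolding R_def Rf_def eq1 eq2 by simp
    then have "D2 * R = (\<Sum>i=1..n. \<xi> i * (m i - \<mu> i))^2" using D2p by simp
    moreover have "sqrt D2 * sqrt R = sqrt (D2 * R)" by (simp add: real_sqrt_mult)
    ultimately have "sqrt D2 * sqrt R = sqrt ((\<Sum>i=1..n. \<xi> i * (m i - \<mu> i))^2)" by simp
    also have "\<dots> = \<bar>\<Sum>i=1..n. \<xi> i * (m i - \<mu> i)\<bar>" by (rule real_sqrt_abs)
    finally show ?thesis by simp
  qed
  have "D \<le> sqrt D1 * sqrt Q + sqrt D2 * sqrt R" using a split b1 b2 by simp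
  also have "\<dots> \<le> sqrt ((sqrt D1)^2 + (sqrt D2)^2) * sqrt ((sqrt Q)^2 + (sqrt R)^2)" by (rule cs2)
  also have "\<dots> = sqrt D * sqrt (Q + R)" using D0 Q0 R0 DD by simp
  finally have c: "D \<le> sqrt D * sqrt (Q + R)" .
  have "D \<le> Q + R"
  proof (cases "D = 0")
    case True then show ?thesis using Q0 R0 by simp
  next
    case False
    then have Dp: "D > 0" using D0 by simp
    have "D^2 \<le> (sqrt D * sqrt (Q+R))^2" using c D0 by (intro power_mono) auto
    also have "\<dots> = D * (Q + R)" using D0 Q0 R0 by (simp add: power_mult_distrib)
    finally have "D * D \<le> D * (Q + R)" by (simp add: power2_eq_square)
    then show ?thesis using Dp by (simp add: mult_le_cancel_left_pos)
  qed
  then show ?thesis unfolding D_def Q_def R_def T_def .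
qed



lemma gauss_exp_sq_integral:
  fixes \<tau> c :: real
  assumes tau: "\<tau> > 0" and c: "2 * c * \<tau>^2 < 1"
  shows "(\<integral>\<^sup>+x. ennreal (normal_density 0 \<tau> x) * ennreal (exp (c * x^2)) \<partial>lborel) = ennreal (1 / sqrt (1 - 2 * c * \<tau>^2))"
proof -
  define r where "r = sqrt (1 - 2 * c * \<tau>^2)"
  have r0: "r > 0" unfolding r_def using c by simp
  have r2: "r^2 = 1 - 2 * c * \<tau>^2" unfolding r_def using c by simp
  define \<tau>' where "\<tau>' = \<tau> / r"
  have t0: "\<tau>' > 0" unfolding \<tau>'_def using tau r0 by simp
  have pt: "normal_density 0 \<tau> x * exp (c * x^2) = (1 / r) * normal_density 0 \<tau>' x" for x
  proof -
    have s1: "sqrt (2 * pi * \<tau>^2) = sqrt (2 * pi) * \<tau>" using tau by (simp add: real_sqrt_mult)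
    have s2: "sqrt (2 * pi * (\<tau>')^2) = sqrt (2 * pi) * \<tau>'" using t0 by (simp add: real_sqrt_mult)
    have tt: "(\<tau>')^2 = \<tau>^2 / r^2" unfolding \<tau>'_def by (simp add: power_divide)
    have "- ((x - 0)^2) / (2 * (\<tau>')^2) = - (x^2) * r^2 / (2 * \<tau>^2)"
      unfolding tt using r0 tau by (simp add: field_simps)
    also have "\<dots> = - (x^2) * (1 - 2 * c * \<tau>^2) / (2 * \<tau>^2)" by (simp only: r2)
    also have "\<dots> = - ((x - 0)^2) / (2 * \<tau>^2) + c * x^2" using tau by (simp add: field_simps)
    finally have ex: "- ((x - 0)^2) / (2 * \<tau>^2) + c * x^2 = - ((x - 0)^2) / (2 * (\<tau>')^2)" by simp
    have "normal_density 0 \<tau> x * exp (c * x^2) = 1 / (sqrt (2 * pi) * \<tau>) * exp (- ((x - 0)^2) / (2 * \<tau>^2) + c * x^2)"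
      unfolding normal_density_def s1 by (simp add: mult_exp_exp algebra_simps)
    also have "\<dots> = 1 / (sqrt (2 * pi) * \<tau>) * exp (- ((x - 0)^2) / (2 * (\<tau>')^2))" unfolding ex ..
    also have "\<dots> = (1 / r) * normal_density 0 \<tau>' x"
      unfolding normal_density_def s2 unfolding \<tau>'_def using r0 tau by (simp add: field_simps)
    finally show ?thesis .
  qed
  have "(\<integral>\<^sup>+x. ennreal (normal_density 0 \<tau> x) * ennreal (exp (c * x^2)) \<partial>lborel)
      = (\<integral>\<^sup>+x. ennreal (1 / r) * ennreal (normal_density 0 \<tau>' x) \<partial>lborel)"
  proof (rule nn_integral_cong)
    fix x
    have "ennreal (normal_density 0 \<tau> x) * ennreal (exp (c * x^2)) = ennreal (normal_density 0 \<tau> x * exp (c * x^2))"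
      by (rule ennreal_mult[symmetric]) (auto simp: normal_density_nonneg)
    also have "\<dots> = ennreal ((1 / r) * normal_density 0 \<tau>' x)" by (simp only: pt)
    also have "\<dots> = ennreal (1 / r) * ennreal (normal_density 0 \<tau>' x)"
      by (rule ennreal_mult) (use r0 in \<open>auto simp: normal_density_nonneg\<close>)
    finally show "ennreal (normal_density 0 \<tau> x) * ennreal (exp (c * x^2)) = ennreal (1 / r) * ennreal (normal_density 0 \<tau>' x)" .
  qed
  also have "\<dots> = ennreal (1 / r) * (\<integral>\<^sup>+x. ennreal (normal_density 0 \<tau>' x) \<partial>lborel)"
    by (rule nn_integral_cmult) simp
  also have "(\<integral>\<^sup>+x. ennreal (normal_density 0 \<tau>' x) \<partial>lborel) = 1"
    using t0 by (subst nn_integral_eq_integral) (auto simp: normal_density_nonneg)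
  finally show ?thesis unfolding r_def by simp
qed

lemma prob_space_gauss: "\<sigma> > 0 \<Longrightarrow> prob_space (gauss_vec n \<sigma>)"
  unfolding gauss_vec_def
  by (intro prob_space_PiM prob_space_normal_density)

lemma sets_gauss: "sets (gauss_vec n \<sigma>) = sets (PiM {1..n} (\<lambda>_. borel))"
  unfolding gauss_vec_def by (intro sets_PiM_cong) auto

lemma space_gauss: "space (gauss_vec n \<sigma>) = PiE {1..n} (\<lambda>_. UNIV)"
  unfolding gauss_vec_def by (simp add: space_PiM)

lemma gauss_coord_meas[measurable]: "(\<lambda>\<xi>. \<xi> i) \<in> borel_measurable (gauss_vec n \<sigma>)"
proof (cases "i \<in> {1..n}")
  case True
  have "(\<lambda>\<xi>. \<xi> i) \<in> measurable (PiM {1..n} (\<lambda>_. borel)) borel"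
    using True by (intro measurable_component_singleton)
  then show ?thesis using sets_gauss measurable_cong_sets by blast
next
  case False
  have "(\<lambda>\<xi>. undefined) \<in> borel_measurable (gauss_vec n \<sigma>)" by simp
  moreover have "\<xi> i = undefined" if "\<xi> \<in> space (gauss_vec n \<sigma>)" for \<xi>
    using that False unfolding space_gauss by (auto simp: PiE_iff extensional_def)
  ultimately show ?thesis using measurable_cong[of "gauss_vec n \<sigma>" "\<lambda>\<xi>. \<xi> i" "\<lambda>\<xi>. undefined"] by blast
qed

lemma gauss_coord_distr:
  assumes s: "\<sigma> > 0" and i: "i \<in> {1..n}"
  shows "distributed (gauss_vec n \<sigma>) lborel (\<lambda>\<xi>. \<xi> i) (\<lambda>x. ennreal (normal_density 0 \<sigma> x))"
  unfolding distributed_def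
proof (intro conjI)
  have "distr (gauss_vec n \<sigma>) lborel (\<lambda>\<xi>. \<xi> i) = distr (gauss_vec n \<sigma>) (density lborel (normal_density 0 \<sigma>)) (\<lambda>\<xi>. \<xi> i)"
    by (intro distr_cong) auto
  also have "\<dots> = density lborel (normal_density 0 \<sigma>)"
    unfolding gauss_vec_def
    by (rule distr_PiM_component) (use i s prob_space_normal_density in auto)
  finally show "distr (gauss_vec n \<sigma>) lborel (\<lambda>\<xi>. \<xi> i) = density lborel (\<lambda>x. ennreal (normal_density 0 \<sigma> x))" .
  show "(\<lambda>x. ennreal (normal_density 0 \<sigma> x)) \<in> borel_measurable lborel" by simp
  show "(\<lambda>\<xi>. \<xi> i) \<in> measurable (gauss_vec n \<sigma>) lborel"
    using gauss_coord_meas measurable_cong_sets[OF refl sets_lborel] by blast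
qed

lemma gauss_indep:
  assumes s: "\<sigma> > 0" and n1: "n \<ge> 1"
  shows "prob_space.indep_vars (gauss_vec n \<sigma>) (\<lambda>_. borel) (\<lambda>i \<xi>. \<xi> i) {1..n}"
proof -
  interpret prob_space "gauss_vec n \<sigma>" using prob_space_gauss[OF s] .
  have ne: "{1..n} \<noteq> {}" using n1 by auto
  show ?thesis
  proof (subst indep_vars_iff_distr_eq_PiM'[OF ne])
    show "random_variable borel (\<lambda>\<xi>. \<xi> i)" if "i \<in> {1..n}" for i by simp
    have "distr (gauss_vec n \<sigma>) (PiM {1..n} (\<lambda>_. borel)) (\<lambda>x. restrict (\<lambda>i. x i) {1..n})
        = distr (gauss_vec n \<sigma>) (gauss_vec n \<sigma>) (\<lambda>x. x)"
      by (intro distr_cong) (auto simp: sets_gauss space_gauss)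
    also have "\<dots> = gauss_vec n \<sigma>" by (rule distr_id)
    also have "\<dots> = PiM {1..n} (\<lambda>i. distr (gauss_vec n \<sigma>) borel (\<lambda>x. x i))"
      unfolding gauss_vec_def
    proof (intro PiM_cong refl)
      fix i assume i: "i \<in> {1..n}"
      have "distr (PiM {1..n} (\<lambda>_. density lborel (normal_density 0 \<sigma>))) borel (\<lambda>x. x i)
          = distr (PiM {1..n} (\<lambda>_. density lborel (normal_density 0 \<sigma>))) (density lborel (normal_density 0 \<sigma>)) (\<lambda>x. x i)"
        by (intro distr_cong) auto
      also have "\<dots> = density lborel (normal_density 0 \<sigma>)"
        by (rule distr_PiM_component) (use i s prob_space_normal_density in auto)
      finally show "density lborel (normal_density 0 \<sigma>) = distr (PiM {1..n} (\<lambda>_. density lborel (normal_density 0 \<sigma>))) borel (\<lambda>x. x i)"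
        by simp
    qed
    finally show "distr (gauss_vec n \<sigma>) (PiM {1..n} (\<lambda>_. borel)) (\<lambda>x. restrict (\<lambda>i. x i) {1..n})
        = PiM {1..n} (\<lambda>i. distr (gauss_vec n \<sigma>) borel (\<lambda>x. x i))" .
  qed
qed



lemma mgf_lin:
  fixes a :: "nat \<Rightarrow> real"
  assumes s: "\<sigma> > 0" and n1: "n \<ge> 1" and J: "J \<subseteq> {1..n}" and th: "0 \<le> \<theta>" "2 * \<theta> * \<sigma>^2 < 1"
  shows "(\<integral>\<^sup>+\<xi>. ennreal (exp (\<theta> * (\<Sum>i\<in>J. a i * \<xi> i)^2 / (\<Sum>i\<in>J. (a i)^2))) \<partial>gauss_vec n \<sigma>)
           \<le> ennreal (1 / sqrt (1 - 2 * \<theta> * \<sigma>^2))"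
proof -
  interpret prob_space "gauss_vec n \<sigma>" using prob_space_gauss[OF s] .
  have fJ: "finite J" using J finite_subset by blast
  define J' where "J' = {i\<in>J. a i \<noteq> 0}"
  have fJ': "finite J'" "J' \<subseteq> J" unfolding J'_def using fJ by auto
  have e1: "(\<Sum>i\<in>J. a i * \<xi> i) = (\<Sum>i\<in>J'. a i * \<xi> i)" for \<xi>
    by (rule sum.mono_neutral_right[OF fJ fJ'(2)]) (auto simp: J'_def)
  have e2: "(\<Sum>i\<in>J. (a i)^2) = (\<Sum>i\<in>J'. (a i)^2)"
    by (rule sum.mono_neutral_right[OF fJ fJ'(2)]) (auto simp: J'_def)
  have b1: "1 \<le> 1 / sqrt (1 - 2 * \<theta> * \<sigma>^2)"
  proof -
    have "sqrt (1 - 2 * \<theta> * \<sigma>^2) \<le> 1" using th s by simp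
    moreover have "sqrt (1 - 2 * \<theta> * \<sigma>^2) > 0" using th by simp
    ultimately show ?thesis by (simp add: field_simps)
  qed
  show ?thesis
  proof (cases "J' = {}")
    case True
    have "(\<integral>\<^sup>+\<xi>. ennreal (exp (\<theta> * (\<Sum>i\<in>J. a i * \<xi> i)^2 / (\<Sum>i\<in>J. (a i)^2))) \<partial>gauss_vec n \<sigma>)
        = (\<integral>\<^sup>+\<xi>. 1 \<partial>gauss_vec n \<sigma>)"
      using True by (intro nn_integral_cong) (simp add: e1 e2)
    also have "\<dots> = 1" by (simp add: emeasure_space_1)
    also have "\<dots> \<le> ennreal (1 / sqrt (1 - 2 * \<theta> * \<sigma>^2))" using b1 by simp
    finally show ?thesis .
  next
    case False
    define S where "S = (\<Sum>i\<in>J'. (a i)^2)"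
    have S0: "S > 0" unfolding S_def using False fJ' by (intro sum_pos) (auto simp: J'_def)
    define \<tau> where "\<tau> = sqrt (\<Sum>i\<in>J'. (\<bar>a i\<bar> * \<sigma>)^2)"
    have tau2: "\<tau>^2 = \<sigma>^2 * S"
      unfolding \<tau>_def S_def by (simp add: power_mult_distrib sum_distrib_left sum_nonneg mult.commute)
    have t0: "\<tau> > 0" using tau2 S0 s unfolding \<tau>_def by (simp add: sum_nonneg)
    have ind: "indep_vars (\<lambda>_. borel) (\<lambda>i \<xi>. a i * \<xi> i) J'"
    proof -
      have "indep_vars (\<lambda>_. borel) (\<lambda>i \<xi>. \<xi> i) J'"
        by (rule indep_vars_subset[OF gauss_indep[OF s n1]]) (use fJ' J in auto)
      then show ?thesis by (rule indep_vars_compose2[where Y="\<lambda>i x. a i * x" and N="\<lambda>_. borel", simplified]) simp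
    qed
    have dist: "distributed (gauss_vec n \<sigma>) lborel (\<lambda>\<xi>. a i * \<xi> i) (normal_density 0 (\<bar>a i\<bar> * \<sigma>))"
      if "i \<in> J'" for i
    proof -
      have "a i \<noteq> 0" "i \<in> {1..n}" using that J unfolding J'_def by auto
      from normal_density_affine[OF gauss_coord_distr[OF s \<open>i \<in> {1..n}\<close>] s \<open>a i \<noteq> 0\<close>, of 0]
      show ?thesis by simp
    qed
    have D: "distributed (gauss_vec n \<sigma>) lborel (\<lambda>\<xi>. \<Sum>i\<in>J'. a i * \<xi> i) (normal_density (\<Sum>i\<in>J'. 0) \<tau>)"
      unfolding \<tau>_def
      by (rule sum_indep_normal[OF fJ'(1) False ind]) (use dist s in \<open>auto simp: J'_def\<close>)
    have "(\<integral>\<^sup>+\<xi>. ennreal (exp (\<theta> * (\<Sum>i\<in>J. a i * \<xi> i)^2 / (\<Sum>i\<in>J. (a i)^2))) \<partial>gauss_vec n \<sigma>)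
        = (\<integral>\<^sup>+\<xi>. ennreal (exp ((\<theta> / S) * ((\<Sum>i\<in>J'. a i * \<xi> i))^2)) \<partial>gauss_vec n \<sigma>)"
      by (intro nn_integral_cong) (simp add: e1 e2 S_def)
    also have "\<dots> = (\<integral>\<^sup>+x. ennreal (normal_density 0 \<tau> x) * ennreal (exp ((\<theta> / S) * x^2)) \<partial>lborel)"
      using distributed_nn_integral[OF D[simplified], of "\<lambda>x. ennreal (exp ((\<theta> / S) * x^2))"] by simp
    also have "\<dots> = ennreal (1 / sqrt (1 - 2 * (\<theta> / S) * \<tau>^2))"
      by (rule gauss_exp_sq_integral[OF t0]) (use tau2 S0 th in \<open>simp add: field_simps\<close>)
    also have "2 * (\<theta> / S) * \<tau>^2 = 2 * \<theta> * \<sigma>^2" using tau2 S0 by (simp add: field_simps)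
    finally show ?thesis by simp
  qed
qed



lemma exp_avg:
  fixes a b :: real
  shows "exp ((a + b) / 2) \<le> (exp a + exp b) / 2"
proof -
  have "exp ((a + b) / 2) = exp (a/2) * exp (b/2)" by (simp add: mult_exp_exp add_divide_distrib)
  also have "\<dots> \<le> ((exp (a/2))^2 + (exp (b/2))^2) / 2"
  proof -
    have "0 \<le> (exp (a/2) - exp (b/2))^2" by simp
    then show ?thesis by (simp add: power2_eq_square algebra_simps)
  qed
  also have "(exp (a/2))^2 = exp a" by (simp add: power2_eq_square mult_exp_exp)
  also have "(exp (b/2))^2 = exp b" by (simp add: power2_eq_square mult_exp_exp)
  finally show ?thesis .
qed

lemma nn_exp_split:
  fixes M :: "'a measure"
  assumes [measurable]: "U \<in> borel_measurable M" "V \<in> borel_measurable M"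
    and bU: "(\<integral>\<^sup>+x. ennreal (exp (2 * \<theta> * U x)) \<partial>M) \<le> ennreal c"
    and bV: "(\<integral>\<^sup>+x. ennreal (exp (2 * \<theta> * V x)) \<partial>M) \<le> ennreal c"
  shows "(\<integral>\<^sup>+x. ennreal (exp (\<theta> * (U x + V x))) \<partial>M) \<le> ennreal c"
proof -
  have "(\<integral>\<^sup>+x. ennreal (exp (\<theta> * (U x + V x))) \<partial>M)
      \<le> (\<integral>\<^sup>+x. ennreal (1/2) * ennreal (exp (2 * \<theta> * U x)) + ennreal (1/2) * ennreal (exp (2 * \<theta> * V x)) \<partial>M)"
  proof (rule nn_integral_mono)
    fix x
    have "exp (\<theta> * (U x + V x)) \<le> (exp (2 * \<theta> * U x) + exp (2 * \<theta> * V x)) / 2"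
    proof -
      have e: "(2 * \<theta> * U x + 2 * \<theta> * V x) / 2 = \<theta> * (U x + V x)" by (simp add: algebra_simps)
      show ?thesis using exp_avg[of "2 * \<theta> * U x" "2 * \<theta> * V x"] unfolding e .
    qed
    then have "ennreal (exp (\<theta> * (U x + V x))) \<le> ennreal ((1/2) * exp (2 * \<theta> * U x) + (1/2) * exp (2 * \<theta> * V x))"
      by (intro ennreal_leI) simp
    also have "\<dots> = ennreal (1/2) * ennreal (exp (2 * \<theta> * U x)) + ennreal (1/2) * ennreal (exp (2 * \<theta> * V x))"
      using ennreal_mult[of "1/2" "exp (2 * \<theta> * U x)"] ennreal_mult[of "1/2" "exp (2 * \<theta> * V x)"]
      by (subst ennreal_plus) simp_all
    finally show "ennreal (exp (\<theta> * (U x + V x))) \<le> ennreal (1/2) * ennreal (exp (2 * \<theta> * U x)) + ennreal (1/2) * ennreal (exp (2 * \<theta> * V x))" .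
  qed
  also have "\<dots> = ennreal (1/2) * (\<integral>\<^sup>+x. ennreal (exp (2 * \<theta> * U x)) \<partial>M) + ennreal (1/2) * (\<integral>\<^sup>+x. ennreal (exp (2 * \<theta> * V x)) \<partial>M)"
    by (simp add: nn_integral_add nn_integral_cmult)
  also have "\<dots> \<le> ennreal (1/2) * ennreal c + ennreal (1/2) * ennreal c"
    using bU bV by (intro add_mono mult_left_mono) auto
  also have "\<dots> = ennreal c"
  proof (cases "c \<ge> 0")
    case True
    have h: "ennreal (1/2) * ennreal c = ennreal (c/2)" by (subst ennreal_mult[symmetric]) (use True in auto)
    have "ennreal (c/2) + ennreal (c/2) = ennreal (c/2 + c/2)" by (rule ennreal_plus[symmetric]) (use True in auto)
    then show ?thesis unfolding h by simp
  next
    case False then show ?thesis by (simp add: ennreal_neg)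
  qed
  finally show ?thesis .
qed

lemma Xq_meas[measurable]: "(\<lambda>\<xi>. Xq B \<xi>) \<in> borel_measurable (gauss_vec n \<sigma>)"
  unfolding Xq_def by measurable
lemma Yq_meas[measurable]: "(\<lambda>\<xi>. Yq B \<xi>) \<in> borel_measurable (gauss_vec n \<sigma>)"
  unfolding Yq_def by measurable
lemma Qf_meas[measurable]: "(\<lambda>\<xi>. Qf n' T \<xi>) \<in> borel_measurable (gauss_vec n \<sigma>)"
  unfolding Qf_def by measurable
lemma Rf_meas[measurable]: "(\<lambda>\<xi>. Rf n' T \<mu> \<xi>) \<in> borel_measurable (gauss_vec n \<sigma>)"
  unfolding Rf_def by measurable

lemma card_as_sum: "finite B \<Longrightarrow> real (card B) = (\<Sum>i\<in>B. (1::real)^2)"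
  by simp

lemma mgf_block:
  assumes s: "\<sigma> > 0" and n1: "n \<ge> 1" and B: "B \<subseteq> {1..n}" and th: "0 \<le> \<theta>" "4 * \<theta> * \<sigma>^2 < 1"
  shows "(\<integral>\<^sup>+\<xi>. ennreal (exp (\<theta> * (Xq B \<xi> + Yq B \<xi>))) \<partial>gauss_vec n \<sigma>) \<le> ennreal (1 / sqrt (1 - 4 * \<theta> * \<sigma>^2))"
proof (rule nn_exp_split)
  have fB: "finite B" using B finite_subset by blast
  have "Xq B \<xi> = (\<Sum>i\<in>B. 1 * \<xi> i)^2 / (\<Sum>i\<in>B. (1::real)^2)" for \<xi>
    unfolding Xq_def using fB by simp
  then show "(\<integral>\<^sup>+x. ennreal (exp (2 * \<theta> * Xq B x)) \<partial>gauss_vec n \<sigma>) \<le> ennreal (1 / sqrt (1 - 4 * \<theta> * \<sigma>^2))"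
    using mgf_lin[OF s n1 B, of "2 * \<theta>" "\<lambda>_. 1"] th by (simp add: mult.assoc)
  have "Yq B \<xi> = (\<Sum>i\<in>B. (real i - cen B) * \<xi> i)^2 / (\<Sum>i\<in>B. (real i - cen B)^2)" for \<xi>
    unfolding Yq_def Vv_def by simp
  then show "(\<integral>\<^sup>+x. ennreal (exp (2 * \<theta> * Yq B x)) \<partial>gauss_vec n \<sigma>) \<le> ennreal (1 / sqrt (1 - 4 * \<theta> * \<sigma>^2))"
    using mgf_lin[OF s n1 B, of "2 * \<theta>" "\<lambda>i. real i - cen B"] th by (simp add: mult.assoc)
qed simp_all



lemma block_meas:
  assumes fB: "finite B"
  shows "(\<lambda>f. exp (c * (Xq B f + Yq B f))) \<in> borel_measurable (PiM B (\<lambda>_. borel))"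
proof -
  have comp: "(\<lambda>f::nat\<Rightarrow>real. f i) \<in> borel_measurable (PiM B (\<lambda>_. borel))" if "i \<in> B" for i
    using that by (rule measurable_component_singleton)
  have s1: "(\<lambda>f::nat\<Rightarrow>real. \<Sum>i\<in>B. f i) \<in> borel_measurable (PiM B (\<lambda>_. borel))"
    using borel_measurable_sum[of B "\<lambda>i f. f i" "PiM B (\<lambda>_. borel)"] comp by simp
  have s2: "(\<lambda>f::nat\<Rightarrow>real. \<Sum>i\<in>B. (real i - cen B) * f i) \<in> borel_measurable (PiM B (\<lambda>_. borel))"
    using borel_measurable_sum[of B "\<lambda>i f. (real i - cen B) * f i" "PiM B (\<lambda>_. borel)"] comp by simp
  show ?thesis unfolding Xq_def Yq_def using s1 s2 by measurable
qed

lemma gauss_block_prod: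
  assumes s: "\<sigma> > 0" and n1: "n \<ge> 1" and fJ: "finite J" and K: "\<And>j. j \<in> J \<Longrightarrow> K j \<subseteq> {1..n}"
    and disj: "disjoint_family_on K J"
    and g: "\<And>j. j \<in> J \<Longrightarrow> g j \<in> borel_measurable (PiM (K j) (\<lambda>_. borel))"
    and g0: "\<And>j f. 0 \<le> g j f"
  shows "(\<integral>\<^sup>+\<xi>. ennreal (\<Prod>j\<in>J. g j (restrict \<xi> (K j))) \<partial>gauss_vec n \<sigma>)
       = (\<Prod>j\<in>J. \<integral>\<^sup>+\<xi>. ennreal (g j (restrict \<xi> (K j))) \<partial>gauss_vec n \<sigma>)"
proof -
  interpret prob_space "gauss_vec n \<sigma>" using prob_space_gauss[OF s] .
  have "indep_vars (\<lambda>j. PiM (K j) (\<lambda>_. borel)) (\<lambda>j \<omega>. restrict (\<lambda>i. \<omega> i) (K j)) J"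
    by (rule indep_vars_restrict[OF gauss_indep[OF s n1] K disj])
  then have "indep_vars (\<lambda>_. borel) (\<lambda>j \<omega>. g j (restrict (\<lambda>i. \<omega> i) (K j))) J"
    by (rule indep_vars_compose2) (rule g)
  then have "indep_vars (\<lambda>_. borel) (\<lambda>j \<omega>. ennreal (g j (restrict (\<lambda>i. \<omega> i) (K j)))) J"
    by (rule indep_vars_compose2[where Y="\<lambda>j x. ennreal x" and N="\<lambda>_. borel"]) simp
  then have ind: "indep_vars (\<lambda>_. borel) (\<lambda>j \<omega>. ennreal (g j (restrict \<omega> (K j)))) J" by simp
  have "(\<integral>\<^sup>+\<xi>. (\<Prod>j\<in>J. ennreal (g j (restrict \<xi> (K j)))) \<partial>gauss_vec n \<sigma>)
       = (\<Prod>j\<in>J. \<integral>\<^sup>+\<xi>. ennreal (g j (restrict \<xi> (K j))) \<partial>gauss_vec n \<sigma>)"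
    by (rule indep_vars_nn_integral[OF fJ ind]) simp
  moreover have "(\<Prod>j\<in>J. ennreal (g j (restrict \<xi> (K j)))) = ennreal (\<Prod>j\<in>J. g j (restrict \<xi> (K j)))" for \<xi>
    by (rule prod_ennreal) (rule g0)
  ultimately show ?thesis by simp
qed

lemma Xq_restrict: "Xq B (restrict \<xi> B) = Xq B \<xi>"
  unfolding Xq_def by simp
lemma Yq_restrict: "Yq B (restrict \<xi> B) = Yq B \<xi>"
  unfolding Yq_def by simp

lemma blk_disj: "disjoint_family_on (blk n T) J"
  unfolding disjoint_family_on_def blk_def by auto

lemma mgf_Q:
  assumes s: "\<sigma> > 0" and n1: "n \<ge> 1" and fT: "finite T"
  shows "(\<integral>\<^sup>+\<xi>. ennreal (exp ((1/(5*\<sigma>^2)) * Qf n T \<xi>)) \<partial>gauss_vec n \<sigma>) \<le> ennreal (sqrt 5 ^ (card T + 1))"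
proof -
  define c where "c = 1/(5*\<sigma>^2)"
  define J where "J = {0..card T}"
  define g where "g j f = exp (c * (Xq (blk n T j) f + Yq (blk n T j) f))" for j f
  have "(\<integral>\<^sup>+\<xi>. ennreal (exp (c * Qf n T \<xi>)) \<partial>gauss_vec n \<sigma>)
      = (\<integral>\<^sup>+\<xi>. ennreal (\<Prod>j\<in>J. g j (restrict \<xi> (blk n T j))) \<partial>gauss_vec n \<sigma>)"
    unfolding Qf_def g_def J_def
    by (simp add: Xq_restrict Yq_restrict sum_distrib_left exp_sum)
  also have "\<dots> = (\<Prod>j\<in>J. \<integral>\<^sup>+\<xi>. ennreal (g j (restrict \<xi> (blk n T j))) \<partial>gauss_vec n \<sigma>)"
    by (rule gauss_block_prod[OF s n1 _ _ blk_disj]) (auto simp: J_def g_def blk_def intro!: block_meas)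
  also have "\<dots> \<le> (\<Prod>j\<in>J. ennreal (sqrt 5))"
  proof (rule prod_mono_ennreal)
    fix j assume "j \<in> J"
    have B: "blk n T j \<subseteq> {1..n}" unfolding blk_def by auto
    have "(\<integral>\<^sup>+\<xi>. ennreal (g j (restrict \<xi> (blk n T j))) \<partial>gauss_vec n \<sigma>)
        = (\<integral>\<^sup>+\<xi>. ennreal (exp (c * (Xq (blk n T j) \<xi> + Yq (blk n T j) \<xi>))) \<partial>gauss_vec n \<sigma>)"
      unfolding g_def by (simp add: Xq_restrict Yq_restrict)
    also have "\<dots> \<le> ennreal (1 / sqrt (1 - 4 * c * \<sigma>^2))"
      by (rule mgf_block[OF s n1 B]) (use s in \<open>auto simp: c_def\<close>)
    also have "1 / sqrt (1 - 4 * c * \<sigma>^2) = sqrt 5"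
      using s unfolding c_def by (simp add: real_sqrt_divide)
    finally show "(\<integral>\<^sup>+\<xi>. ennreal (g j (restrict \<xi> (blk n T j))) \<partial>gauss_vec n \<sigma>) \<le> ennreal (sqrt 5)" .
  qed
  also have "\<dots> = ennreal (sqrt 5) ^ (card T + 1)"
    unfolding J_def by simp
  also have "\<dots> = ennreal (sqrt 5 ^ (card T + 1))"
    by (rule ennreal_power) simp
  finally show ?thesis unfolding c_def .
qed

lemma mgf_R:
  assumes s: "\<sigma> > 0" and n1: "n \<ge> 1"
  shows "(\<integral>\<^sup>+\<xi>. ennreal (exp ((1/(5*\<sigma>^2)) * Rf n T \<mu> \<xi>)) \<partial>gauss_vec n \<sigma>) \<le> ennreal (sqrt 5 ^ (card T + 1))"
proof -
  define c where "c = 1/(5*\<sigma>^2)"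
  have "(\<integral>\<^sup>+\<xi>. ennreal (exp (c * Rf n T \<mu> \<xi>)) \<partial>gauss_vec n \<sigma>) \<le> ennreal (1 / sqrt (1 - 2 * c * \<sigma>^2))"
    unfolding Rf_def
    using mgf_lin[OF s n1 order_refl, of c "\<lambda>i. \<mu> i - mproj n T \<mu> i"] s
    by (simp add: c_def mult.assoc)
  also have "1 / sqrt (1 - 2 * c * \<sigma>^2) \<le> sqrt 5 ^ (card T + 1)"
  proof -
    have "1 / sqrt (1 - 2 * c * \<sigma>^2) = sqrt (5/3)"
      using s unfolding c_def by (simp add: real_sqrt_divide)
    also have "\<dots> \<le> sqrt 5" by simp
    also have "\<dots> \<le> sqrt 5 ^ (card T + 1)"
      by (rule self_le_power) simp_all
    finally show ?thesis .
  qed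
  finally show ?thesis unfolding c_def by (simp add: ennreal_leI order_trans)
qed



lemma bad_T:
  assumes s: "\<sigma> > 0" and n1: "n \<ge> 1" and fT: "finite T"
  shows "emeasure (gauss_vec n \<sigma>) {\<xi>\<in>space (gauss_vec n \<sigma>). real (card T + 1) * \<sigma>^2 * L \<le> Qf n T \<xi> + Rf n T \<mu> \<xi>}
     \<le> ennreal (sqrt 5 ^ (card T + 1) * exp (- (real (card T + 1) * L / 10)))"
proof -
  define M where "M = gauss_vec n \<sigma>"
  define lam where "lam = 1 / (10 * \<sigma>^2)"
  define x where "x = real (card T + 1) * \<sigma>^2 * L"
  define A where "A = {\<xi>\<in>space M. x \<le> Qf n T \<xi> + Rf n T \<mu> \<xi>}"
  have lam0: "lam > 0" unfolding lam_def using s by simp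
  have Ameas: "A \<in> sets M" unfolding A_def M_def by measurable
  have twolam: "2 * lam = 1 / (5 * \<sigma>^2)" unfolding lam_def by simp
  have E: "(\<integral>\<^sup>+\<xi>. ennreal (exp (lam * (Qf n T \<xi> + Rf n T \<mu> \<xi>))) \<partial>M) \<le> ennreal (sqrt 5 ^ (card T + 1))"
    unfolding M_def
    by (rule nn_exp_split) (use mgf_Q[OF s n1 fT] mgf_R[OF s n1] in \<open>simp_all add: twolam\<close>)
  have "emeasure M A = (\<integral>\<^sup>+\<xi>. indicator A \<xi> \<partial>M)" using Ameas by simp
  also have "\<dots> \<le> (\<integral>\<^sup>+\<xi>. ennreal (exp (- lam * x)) * ennreal (exp (lam * (Qf n T \<xi> + Rf n T \<mu> \<xi>))) \<partial>M)"
  proof (rule nn_integral_mono)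
    fix \<xi> assume "\<xi> \<in> space M"
    have eq: "ennreal (exp (- lam * x)) * ennreal (exp (lam * (Qf n T \<xi> + Rf n T \<mu> \<xi>)))
        = ennreal (exp (lam * (Qf n T \<xi> + Rf n T \<mu> \<xi>) - lam * x))"
      by (subst ennreal_mult[symmetric]) (auto simp: mult_exp_exp)
    show "indicator A \<xi> \<le> ennreal (exp (- lam * x)) * ennreal (exp (lam * (Qf n T \<xi> + Rf n T \<mu> \<xi>)))"
    proof (cases "\<xi> \<in> A")
      case True
      then have "lam * x \<le> lam * (Qf n T \<xi> + Rf n T \<mu> \<xi>)" unfolding A_def using lam0 by (auto intro: mult_left_mono)
      then have "1 \<le> exp (lam * (Qf n T \<xi> + Rf n T \<mu> \<xi>) - lam * x)" by simp
      then show ?thesis using True unfolding eq by (simp add: ennreal_leI)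
    next
      case False then show ?thesis by simp
    qed
  qed
  also have "\<dots> = ennreal (exp (- lam * x)) * (\<integral>\<^sup>+\<xi>. ennreal (exp (lam * (Qf n T \<xi> + Rf n T \<mu> \<xi>))) \<partial>M)"
    by (rule nn_integral_cmult) (simp add: M_def)
  also have "\<dots> \<le> ennreal (exp (- lam * x)) * ennreal (sqrt 5 ^ (card T + 1))"
    using E by (rule mult_left_mono) simp
  also have "\<dots> = ennreal (sqrt 5 ^ (card T + 1) * exp (- (real (card T + 1) * L / 10)))"
  proof -
    have "lam * x = real (card T + 1) * L / 10" unfolding lam_def x_def using s by (simp add: field_simps)
    then show ?thesis by (subst ennreal_mult[symmetric]) (auto simp: mult.commute)
  qed
  finally show ?thesis unfolding A_def M_def x_def .
qed

lemma sum_pow_card: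
  fixes x :: real
  shows "finite S \<Longrightarrow> (\<Sum>T\<in>Pow S. x ^ card T) = (1 + x) ^ card S"
proof (induction S rule: finite_induct)
  case empty then show ?case by simp
next
  case (insert a S)
  have inj: "inj_on (insert a) (Pow S)"
    unfolding inj_on_def
  proof (intro ballI impI)
    fix X Y assume XY: "X \<in> Pow S" "Y \<in> Pow S" "insert a X = insert a Y"
    then have "a \<notin> X" "a \<notin> Y" using insert.hyps(2) by auto
    then show "X = Y" using XY(3) by (metis Diff_insert_absorb)
  qed
  have disj: "Pow S \<inter> insert a ` Pow S = {}" using insert.hyps(2) by auto
  have fin: "finite (Pow S)" "finite (insert a ` Pow S)" using insert.hyps(1) by auto
  have "(\<Sum>T\<in>Pow (insert a S). x ^ card T) = (\<Sum>T\<in>Pow S. x ^ card T) + (\<Sum>T\<in>insert a ` Pow S. x ^ card T)"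
    unfolding Pow_insert by (rule sum.union_disjoint[OF fin disj])
  also have "(\<Sum>T\<in>insert a ` Pow S. x ^ card T) = (\<Sum>T\<in>Pow S. x ^ card (insert a T))"
    by (rule sum.reindex[OF inj, unfolded comp_def])
  also have "\<dots> = (\<Sum>T\<in>Pow S. x * x ^ card T)"
  proof (rule sum.cong[OF refl])
    fix T assume "T \<in> Pow S"
    then have "finite T" "a \<notin> T" using insert.hyps finite_subset by auto
    then show "x ^ card (insert a T) = x * x ^ card T" by simp
  qed
  also have "\<dots> = x * (1 + x) ^ card S" using insert.IH by (simp add: sum_distrib_left[symmetric])
  finally show ?case using insert.hyps insert.IH by (simp add: algebra_simps)
qed

lemma exp2_ge: "exp (2::real) \<ge> 81/16"
proof -
  have "3/2 \<le> exp (1/2::real)" using exp_ge_add_one_self[of "1/2::real"] by simp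
  then have "(3/2)^4 \<le> (exp (1/2::real))^4" by (intro power_mono) auto
  also have "(exp (1/2::real))^4 = exp 2" by (simp add: exp_of_nat_mult[symmetric] power_mult[symmetric] numeral_eq_Suc mult_exp_exp)
  finally show ?thesis by (simp add: power_divide)
qed



lemma card_filter_sum: "finite S \<Longrightarrow> real (card {i\<in>S. P i}) = (\<Sum>i\<in>S. if P i then 1 else 0)"
  by (simp add: sum.If_cases Int_def)

lemma proj_meas:
  "(\<lambda>\<xi>. proj_convex n (\<lambda>i. \<mu> i + \<xi> i) k) \<in> borel_measurable (gauss_vec n' \<sigma>)"
proof -
  have F: "(\<lambda>\<xi>. \<lambda>i. \<mu> i + \<xi> i) \<in> measurable (gauss_vec n' \<sigma>) (borel :: (nat \<Rightarrow> real) measure)"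
    by (rule measurable_coordinatewise_then_product) simp
  have g: "(\<lambda>y. proj_convex n y k) \<in> borel_measurable (borel :: (nat \<Rightarrow> real) measure)"
    by (rule borel_measurable_continuous_onI[OF proj_coord_continuous])
  show ?thesis using measurable_compose[OF F g] by simp
qed

lemma numeric_bound:
  fixes n :: nat and \<alpha> :: real
  assumes n1: "n \<ge> 1" and a: "0 < \<alpha>" "\<alpha> < 1"
  defines "Lc \<equiv> 20 + 40 * ln (real n) + 10 * ln (1 / \<alpha>)"
  shows "(\<Sum>T\<in>Pow {2..n-1}. sqrt 5 ^ (card T + 1) * exp (- (real (card T + 1) * Lc / 10))) \<le> \<alpha>"
proof -
  define z where "z = sqrt 5 * exp (-2) / real n ^ 4"
  have n0: "real n \<ge> 1" using n1 by simp
  have z0: "z \<ge> 0" unfolding z_def by simp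
  have e: "exp (- (Lc / 10)) = exp (-2) / real n ^ 4 * \<alpha>"
  proof -
    have "- (Lc / 10) = -2 + (- (real 4 * ln (real n))) + (- ln (1 / \<alpha>))" unfolding Lc_def by (simp add: field_simps)
    then have "exp (- (Lc / 10)) = exp (-2) * exp (- (real 4 * ln (real n))) * exp (- ln (1/\<alpha>))"
      by (simp only: exp_add)
    also have "exp (- (real 4 * ln (real n))) = 1 / real n ^ 4"
    proof -
      have "exp (real 4 * ln (real n)) = exp (ln (real n)) ^ 4" by (rule exp_of_nat_mult)
      then have "exp (real 4 * ln (real n)) = real n ^ 4" using n0 by simp
      then show ?thesis by (simp add: exp_minus inverse_eq_divide)
    qed
    also have "exp (- ln (1/\<alpha>)) = \<alpha>" using a by (simp add: exp_minus)
    finally show ?thesis by simp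
  qed
  have tm: "sqrt 5 ^ (card T + 1) * exp (- (real (card T + 1) * Lc / 10)) \<le> \<alpha> * (z * z ^ card T)" for T
  proof -
    have "exp (- (real (card T + 1) * Lc / 10)) = exp (real (card T + 1) * (- (Lc / 10)))"
      by (rule arg_cong[where f=exp]) simp
    also have "\<dots> = exp (- (Lc / 10)) ^ (card T + 1)" by (rule exp_of_nat_mult)
    finally have "exp (- (real (card T + 1) * Lc / 10)) = exp (- (Lc / 10)) ^ (card T + 1)" .
    then have "sqrt 5 ^ (card T + 1) * exp (- (real (card T + 1) * Lc / 10)) = (z * \<alpha>) ^ (card T + 1)"
      unfolding e z_def by (simp add: power_mult_distrib[symmetric] algebra_simps)
    also have "\<dots> = z ^ (card T + 1) * (\<alpha> * \<alpha> ^ card T)" by (simp add: power_mult_distrib)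
    also have "\<dots> \<le> z ^ (card T + 1) * (\<alpha> * 1)"
      using a z0 by (intro mult_left_mono power_le_one) auto
    finally show ?thesis by (simp add: mult.commute)
  qed
  have "(\<Sum>T\<in>Pow {2..n-1}. sqrt 5 ^ (card T + 1) * exp (- (real (card T + 1) * Lc / 10)))
      \<le> (\<Sum>T\<in>Pow {2..n-1}. \<alpha> * (z * z ^ card T))"
    by (rule sum_mono) (rule tm)
  also have "\<dots> = \<alpha> * (z * (1 + z) ^ card {2..n-1})"
    by (simp add: sum_distrib_left[symmetric] sum_pow_card mult.assoc)
  also have "\<dots> \<le> \<alpha> * 1"
  proof (intro mult_left_mono)
    have e2: "exp (2::real) \<ge> 81/16" by (rule exp2_ge)
    have s5: "sqrt 5 \<le> (81/32::real)"
    proof -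
      have "sqrt 5 \<le> sqrt ((81/32::real)^2)" by (intro real_sqrt_le_mono) (simp add: power2_eq_square)
      then show ?thesis by simp
    qed
    have ze: "sqrt 5 * exp (-2) \<le> (1/2::real)"
    proof -
      have "sqrt 5 \<le> exp 2 / 2" using s5 e2 by simp
      then have "sqrt 5 * exp (-2) \<le> (exp 2 / 2) * exp (-2)" by (intro mult_right_mono) auto
      also have "\<dots> = 1/2" by (simp add: exp_minus field_simps)
      finally show ?thesis .
    qed
    have n4: "real n ^ 4 \<ge> real n" using n0 by (simp add: self_le_power)
    have zn: "z \<le> 1 / (2 * real n)"
    proof -
      have "z \<le> (1/2) / real n ^ 4" unfolding z_def using ze n0 by (intro divide_right_mono) auto
      also have "\<dots> \<le> (1/2) / real n" using n4 n0 by (intro divide_left_mono) auto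
      finally show ?thesis by simp
    qed
    have z1: "z \<le> 1/2" using zn n0
      by (smt (verit, ccfv_SIG) divide_le_eq_1_pos frac_le one_le_numeral)
    have "(1 + z) ^ card {2..n-1} \<le> exp z ^ card {2..n-1}"
      using z0 by (intro power_mono) (auto simp: add.commute)
    also have "\<dots> = exp (real (card {2..n-1}) * z)" by (simp add: exp_of_nat_mult)
    also have "\<dots> \<le> exp (real n * z)" using z0 by (intro exp_mono mult_right_mono) auto
    also have "\<dots> \<le> exp (1/2)"
    proof -
      have "real n * z \<le> real n * (1 / (2 * real n))" using zn n0 by (intro mult_left_mono) auto
      then show ?thesis using n0 by simp
    qed
    also have "\<dots> \<le> 2"
    proof -
      have "exp (1/2::real) ^ 2 = exp 1" by (simp add: exp_of_nat_mult[symmetric])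
      also have "\<dots> \<le> 3" by (rule exp_le)
      finally have "exp (1/2::real) ^ 2 \<le> 2 ^ 2" by simp
      then show ?thesis by (rule power2_le_imp_le) simp
    qed
    finally have "(1 + z) ^ card {2..n-1} \<le> 2" .
    then have "z * (1 + z) ^ card {2..n-1} \<le> (1/2) * 2" using z0 z1 by (intro mult_mono) auto
    then show "z * (1 + z) ^ card {2..n-1} \<le> 1" by simp
  qed (use a in simp)
  finally show ?thesis by simp
qed

theorem mainTheorem7:
  fixes n :: nat and \<sigma> \<alpha> :: real and \<mu> :: "nat \<Rightarrow> real"
  assumes "n \<ge> 1" and "\<sigma> > 0" and "0 < \<alpha>" and "\<alpha> < 1"
    and "\<mu> \<in> convex_seqs n"
  shows "measure (gauss_vec n \<sigma>)
      {\<xi> \<in> space (gauss_vec n \<sigma>).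
         (let y = (\<lambda>i. \<mu> i + \<xi> i);
              \<mu>h = proj_convex n y;
              r = \<sigma>^2 * real (q_pieces n \<mu>h) * (20 + 40 * ln (real n) + 10 * ln (1 / \<alpha>)) / real n
          in (1 / real n) * (\<Sum>i=1..n. (\<mu>h i - \<mu> i)^2) \<le> r)}
    \<ge> 1 - \<alpha>"
proof -
  note n1 = assms(1) and s = assms(2) and a = assms(3,4) and muK = assms(5)
  define M where "M = gauss_vec n \<sigma>"
  interpret prob_space M unfolding M_def using prob_space_gauss[OF s] .
  define Lc where "Lc = 20 + 40 * ln (real n) + 10 * ln (1 / \<alpha>)"
  define P where "P \<xi> = proj_convex n (\<lambda>i. \<mu> i + \<xi> i)" for \<xi>
  define G where "G = {\<xi>\<in>space M. (1 / real n) * (\<Sum>i=1..n. (P \<xi> i - \<mu> i)^2) \<le> \<sigma>^2 * real (q_pieces n (P \<xi>)) * Lc / real n}"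
  have Geq: "{\<xi> \<in> space (gauss_vec n \<sigma>).
         (let y = (\<lambda>i. \<mu> i + \<xi> i);
              \<mu>h = proj_convex n y;
              r = \<sigma>^2 * real (q_pieces n \<mu>h) * (20 + 40 * ln (real n) + 10 * ln (1 / \<alpha>)) / real n
          in (1 / real n) * (\<Sum>i=1..n. (\<mu>h i - \<mu> i)^2) \<le> r)} = G"
    unfolding G_def M_def P_def Lc_def Let_def by simp
  have Pm[measurable]: "(\<lambda>\<xi>. P \<xi> k) \<in> borel_measurable M" for k
    unfolding P_def M_def by (rule proj_meas)
  have qeq: "real (q_pieces n (P \<xi>)) = 1 + (\<Sum>i\<in>{2..n-1}. if 2 * P \<xi> i < P \<xi> (i+1) + P \<xi> (i-1) then 1 else 0)" for \<xi>
    unfolding q_pieces_def using card_filter_sum[of "{2..n-1}"] by simp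
  have Gmeas: "G \<in> sets M"
  proof -
    have "G = {\<xi>\<in>space M. (1 / real n) * (\<Sum>i=1..n. (P \<xi> i - \<mu> i)^2) \<le>
        \<sigma>^2 * (1 + (\<Sum>i\<in>{2..n-1}. if 2 * P \<xi> i < P \<xi> (i+1) + P \<xi> (i-1) then 1 else 0)) * Lc / real n}"
      unfolding G_def qeq ..
    also have "\<dots> \<in> sets M" by measurable
    finally show ?thesis .
  qed
  define bad where "bad T = {\<xi>\<in>space M. real (card T + 1) * \<sigma>^2 * Lc \<le> Qf n T \<xi> + Rf n T \<mu> \<xi>}" for T
  have badm: "bad T \<in> sets M" for T unfolding bad_def M_def by measurable
  have sub: "space M - G \<subseteq> (\<Union>T\<in>Pow {2..n-1}. bad T)"
  proof
    fix \<xi> assume xi: "\<xi> \<in> space M - G"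
    define T where "T = kinks n (P \<xi>)"
    have TS: "T \<in> Pow {2..n-1}" unfolding T_def using kinks_sub by blast
    have db: "(\<Sum>i=1..n. (P \<xi> i - \<mu> i)^2) \<le> Qf n T \<xi> + Rf n T \<mu> \<xi>"
      unfolding P_def T_def by (rule det_bound[OF muK])
    have qT: "q_pieces n (P \<xi>) = card T + 1" unfolding q_pieces_def T_def kinks_def by simp
    have "\<xi> \<in> bad T"
    proof (rule ccontr)
      assume "\<xi> \<notin> bad T"
      then have "Qf n T \<xi> + Rf n T \<mu> \<xi> < real (card T + 1) * \<sigma>^2 * Lc" using xi unfolding bad_def by auto
      then have "(\<Sum>i=1..n. (P \<xi> i - \<mu> i)^2) \<le> \<sigma>^2 * real (q_pieces n (P \<xi>)) * Lc" using db qT by (simp add: ac_simps)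
      then have "(\<Sum>i=1..n. (P \<xi> i - \<mu> i)^2) / real n \<le> \<sigma>^2 * real (q_pieces n (P \<xi>)) * Lc / real n"
        using n1 by (intro divide_right_mono) auto
      then have "\<xi> \<in> G" using xi unfolding G_def by simp
      then show False using xi by simp
    qed
    then show "\<xi> \<in> (\<Union>T\<in>Pow {2..n-1}. bad T)" using TS by blast
  qed
  have bT: "measure M (bad T) \<le> sqrt 5 ^ (card T + 1) * exp (- (real (card T + 1) * Lc / 10))"
    if "T \<in> Pow {2..n-1}" for T
  proof -
    have fT: "finite T" using that finite_subset by blast
    have "ennreal (measure M (bad T)) = emeasure M (bad T)" by (simp add: emeasure_eq_measure)
    also have "\<dots> \<le> ennreal (sqrt 5 ^ (card T + 1) * exp (- (real (card T + 1) * Lc / 10)))"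
      unfolding bad_def M_def by (rule bad_T[OF s n1 fT])
    finally show ?thesis by (simp add: ennreal_le_iff)
  qed
  have "measure M (space M - G) \<le> measure M (\<Union>T\<in>Pow {2..n-1}. bad T)"
    by (rule finite_measure_mono[OF sub]) (use badm in auto)
  also have "\<dots> \<le> (\<Sum>T\<in>Pow {2..n-1}. measure M (bad T))"
    by (rule finite_measure_subadditive_finite) (use badm in auto)
  also have "\<dots> \<le> (\<Sum>T\<in>Pow {2..n-1}. sqrt 5 ^ (card T + 1) * exp (- (real (card T + 1) * Lc / 10)))"
    by (rule sum_mono) (rule bT)
  also have "\<dots> \<le> \<alpha>" unfolding Lc_def by (rule numeric_bound[OF n1 a])
  finally have "measure M (space M - G) \<le> \<alpha>" .
  then have "1 - \<alpha> \<le> measure M G" using prob_compl[OF Gmeas] by simp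
  then show ?thesis by (subst Geq) (simp add: M_def)
qed


end
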